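(* There exist a Fuchsian group $\Gamma$ and two subsets $F_1, F_2 \subset \mathbb{H}$ with $\mu(F_1) \neq \mu(F_2)$ such that each $F \in \{F_1, F_2\}$ satisfies all of the following conditions: (i) $F$ is open; (ii) no two distinct points of $F$ are equivalent under $\Gamma$; (ii$'$) no point of $F$ is equivalent under $\Gamma$ to a different point of $\overline{F}$; (iii) for every $z \in \mathbb{H}$ there exists some $M \in \Gamma$ such that $Mz \in \overline{F}$; (iv) every neighbourhood of a boundary point of $F$ (boundary taken in $\mathbb{H}$) contains a point of $\mathbb{H} \setminus F$ that is equivalent under $\Gamma$ to a point of $F$; (v) there is no open set $G \subset \mathbb{H}$ with $G \supsetneq F$ such that no two distinct points of $G$ are equivalent under $\Gamma$.
   Context: $\mathbb{H} = \{ z \in \mathbb{C} : \mathrm{Im}\, z > 0\}$ is the upper half-plane; $\overline{F}$ denotes the closure of $F$ in $\mathbb{H}$. A Fuchsian group is a discrete subgroup $\Gamma$ of $\mathrm{PSL}_2(\mathbb{R})$, acting on $\mathbb{H}$ by $z \mapsto Mz = \frac{az+b}{cz+d}$ for $M = \pm\begin{pmatrix} a & b \\ c & d\end{pmatrix}$. Two points $z, w \in \mathbb{H}$ are equivalent under $\Gamma$ if $w = Mz$ for some $M \in \Gamma$. $\mu$ denotes the hyperbolic area measure on $\mathbb{H}$, $d\mu = y^{-2}\,dx\,dy$ (for $z = x+iy$). *)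

theory Defs
  imports "HOL-Analysis.Analysis"
begin

definition uhp :: "complex set" where
  "uhp = {z. Im z > 0}"

text \<open>Real 2x2 matrices (a,b,c,d) standing for [[a,b],[c,d]].\<close>
type_synonym mat2 = "real \<times> real \<times> real \<times> real"

definition SL2R :: "mat2 set" where
  "SL2R = {(a,b,c,d). a*d - b*c = 1}"

fun mat2_mult :: "mat2 \<Rightarrow> mat2 \<Rightarrow> mat2" where
  "mat2_mult (a,b,c,d) (a',b',c',d') =
     (a*a' + b*c', a*b' + b*d', c*a' + d*c', c*b' + d*d')"

fun mat2_inv :: "mat2 \<Rightarrow> mat2" where
  "mat2_inv (a,b,c,d) = (d, -b, -c, a)"

fun mat2_neg :: "mat2 \<Rightarrow> mat2" where
  "mat2_neg (a,b,c,d) = (-a, -b, -c, -d)"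

fun moeb :: "mat2 \<Rightarrow> complex \<Rightarrow> complex" where
  "moeb (a,b,c,d) z = (of_real a * z + of_real b) / (of_real c * z + of_real d)"

text \<open>A Fuchsian group, i.e. a discrete subgroup of PSL2(R), represented by its full
  preimage in SL2(R) (a subgroup of SL2(R) containing -I), which is discrete in SL2(R).\<close>
definition fuchsian :: "mat2 set \<Rightarrow> bool" where
  "fuchsian \<Gamma> \<longleftrightarrow>
     \<Gamma> \<subseteq> SL2R \<and> (1,0,0,1) \<in> \<Gamma> \<and>
     (\<forall>M\<in>\<Gamma>. \<forall>N\<in>\<Gamma>. mat2_mult M N \<in> \<Gamma>) \<and>
     (\<forall>M\<in>\<Gamma>. mat2_inv M \<in> \<Gamma>) \<and>
     (\<forall>M\<in>\<Gamma>. mat2_neg M \<in> \<Gamma>) \<and>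
     (\<forall>M\<in>\<Gamma>. \<exists>e>0. \<forall>N\<in>\<Gamma>. dist N M < e \<longrightarrow> N = M)"

definition gequiv :: "mat2 set \<Rightarrow> complex \<Rightarrow> complex \<Rightarrow> bool" where
  "gequiv \<Gamma> z w \<longleftrightarrow> (\<exists>M\<in>\<Gamma>. w = moeb M z)"

definition hyp_area :: "complex measure" where
  "hyp_area = density lborel (\<lambda>z. if Im z > 0 then ennreal (1 / (Im z)^2) else 0)"

definition hclosure :: "complex set \<Rightarrow> complex set" where
  "hclosure F = closure F \<inter> uhp"

definition no_equiv_pts :: "mat2 set \<Rightarrow> complex set \<Rightarrow> bool" where
  "no_equiv_pts \<Gamma> G \<longleftrightarrow> (\<forall>z\<in>G. \<forall>w\<in>G. z \<noteq> w \<longrightarrow> \<not> gequiv \<Gamma> z w)"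

definition fund_conditions :: "mat2 set \<Rightarrow> complex set \<Rightarrow> bool" where
  "fund_conditions \<Gamma> F \<longleftrightarrow>
     F \<subseteq> uhp \<and>
     open F \<and>
     no_equiv_pts \<Gamma> F \<and>
     (\<forall>z\<in>F. \<forall>w\<in>hclosure F. z \<noteq> w \<longrightarrow> \<not> gequiv \<Gamma> z w) \<and>
     (\<forall>z\<in>uhp. \<exists>M\<in>\<Gamma>. moeb M z \<in> hclosure F) \<and>
     (\<forall>w\<in>hclosure F - F. \<forall>U. open U \<and> w \<in> U \<longrightarrow>
         (\<exists>p\<in>U. p \<in> uhp - F \<and> (\<exists>q\<in>F. gequiv \<Gamma> q p))) \<and>
     \<not> (\<exists>G. open G \<and> G \<subseteq> uhp \<and> F \<subset> G \<and> no_equiv_pts \<Gamma> G)"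

end

theory Submission
  imports Defs "HOL-Library.Countable" "HOL-Probability.Sinc_Integral"
begin

definition sinv :: "complex \<Rightarrow> complex" where "sinv z = - 1 / z"

definition G0 :: "mat2 set" where
  "G0 = {(1,0,0,1), (-1,0,0,-1), (0,-1,1,0), (0,1,-1,0)}"

lemma sinv_sinv[simp]: "sinv (sinv z) = z"
  unfolding sinv_def by (cases "z = 0") (auto simp: field_simps)

lemma Im_sinv: "Im (sinv z) = Im z / ((Re z)^2 + (Im z)^2)"
  unfolding sinv_def by (simp add: Im_divide power2_eq_square)

lemma Re_sinv: "Re (sinv z) = - Re z / ((Re z)^2 + (Im z)^2)"
  unfolding sinv_def by (simp add: Re_divide power2_eq_square)

lemma uhp_iff: "z \<in> uhp \<longleftrightarrow> Im z > 0" by (simp add: uhp_def)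

lemma sinv_uhp: "z \<in> uhp \<Longrightarrow> sinv z \<in> uhp"
proof -
  assume "z \<in> uhp"
  then have "Im z > 0" by (simp add: uhp_iff)
  moreover have "(Re z)^2 + (Im z)^2 > 0" using calculation by (simp add: add_nonneg_pos)
  ultimately show ?thesis by (simp add: uhp_iff Im_sinv)
qed

lemma open_uhp: "open uhp"
  unfolding uhp_def by (intro open_Collect_less continuous_intros)

lemma isCont_sinv: "z \<in> uhp \<Longrightarrow> isCont sinv z"
  unfolding sinv_def uhp_def by (auto intro!: continuous_intros)

lemma gequiv_G0: "gequiv G0 z w \<longleftrightarrow> w = z \<or> w = sinv z"
  unfolding gequiv_def G0_def sinv_def by (auto simp: field_simps)

lemma fuchsian_G0: "fuchsian G0"
  unfolding fuchsian_def
proof (intro conjI)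
  show "G0 \<subseteq> SL2R" by (auto simp: G0_def SL2R_def)
  show "(1,0,0,1) \<in> G0" by (simp add: G0_def)
  show "\<forall>M\<in>G0. \<forall>N\<in>G0. mat2_mult M N \<in> G0" by (auto simp: G0_def)
  show "\<forall>M\<in>G0. mat2_inv M \<in> G0" by (auto simp: G0_def)
  show "\<forall>M\<in>G0. mat2_neg M \<in> G0" by (auto simp: G0_def)
  show "\<forall>M\<in>G0. \<exists>e>0. \<forall>N\<in>G0. dist N M < e \<longrightarrow> N = M"
  proof
    fix M assume M: "M \<in> G0"
    have "dist N M \<ge> 1" if "N \<in> G0" "N \<noteq> M" for N
    proof -
      obtain a b c d where N: "N = (a,b,c,d)" by (cases N) auto
      obtain a' b' c' d' where M': "M = (a',b',c',d')" by (cases M) auto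
      have "\<bar>a - a'\<bar> \<ge> 1 \<or> \<bar>b - b'\<bar> \<ge> 1"
        using that M unfolding N M' G0_def by auto
      moreover have "dist a a' \<le> dist N M" "dist b b' \<le> dist N M"
      proof -
        have "dist a a' \<le> dist (a,b,c,d) (a',b',c',d')" by (rule dist_fst_le[where x="(a,b,c,d)" and y="(a',b',c',d')", simplified])
        then show "dist a a' \<le> dist N M" by (simp add: N M')
        have "dist (b,c,d) (b',c',d') \<le> dist (a,b,c,d) (a',b',c',d')" by (rule dist_snd_le[where x="(a,b,c,d)" and y="(a',b',c',d')", simplified])
        moreover have "dist b b' \<le> dist (b,c,d) (b',c',d')" by (rule dist_fst_le[where x="(b,c,d)" and y="(b',c',d')", simplified])
        ultimately show "dist b b' \<le> dist N M" by (simp add: N M')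
      qed
      ultimately show ?thesis by (auto simp: dist_real_def)
    qed
    then show "\<exists>e>0. \<forall>N\<in>G0. dist N M < e \<longrightarrow> N = M"
      by (intro exI[of _ 1]) force
  qed
qed

lemma fund_from:
  assumes opF: "open F" and Fu: "F \<subseteq> uhp"
    and A: "\<forall>z\<in>F. sinv z \<notin> closure F"
    and B: "\<forall>z\<in>uhp - closure F. sinv z \<in> F"
    and C: "\<forall>z\<in>uhp - F. \<forall>e>0. \<exists>p\<in>uhp. dist p z < e \<and> sinv p \<in> F"
  shows "fund_conditions G0 F"
proof -
  have notF: "p \<notin> F" if "sinv p \<in> F" for p
  proof
    assume "p \<in> F"
    then have "sinv p \<notin> closure F" using A by auto
    with that closure_subset show False by auto
  qed
  have ii: "no_equiv_pts G0 F"
    unfolding no_equiv_pts_def gequiv_G0 using A closure_subset by blast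
  have ii': "\<forall>z\<in>F. \<forall>w\<in>hclosure F. z \<noteq> w \<longrightarrow> \<not> gequiv G0 z w"
    unfolding hclosure_def gequiv_G0 using A by blast
  have iii: "\<forall>z\<in>uhp. \<exists>M\<in>G0. moeb M z \<in> hclosure F"
  proof
    fix z assume z: "z \<in> uhp"
    show "\<exists>M\<in>G0. moeb M z \<in> hclosure F"
    proof (cases "z \<in> closure F")
      case True
      then show ?thesis using z by (intro bexI[of _ "(1,0,0,1)"]) (auto simp: G0_def hclosure_def)
    next
      case False
      then have "sinv z \<in> F" using B z by auto
      then have "moeb (0,-1,1,0) z \<in> hclosure F"
        using Fu closure_subset by (auto simp: hclosure_def sinv_def)
      then show ?thesis by (auto simp: G0_def)
    qed
  qed
  have iv: "\<forall>w\<in>hclosure F - F. \<forall>U. open U \<and> w \<in> U \<longrightarrow>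
         (\<exists>p\<in>U. p \<in> uhp - F \<and> (\<exists>q\<in>F. gequiv G0 q p))"
  proof (intro ballI allI impI)
    fix w U assume w: "w \<in> hclosure F - F" and U: "open U \<and> w \<in> U"
    then obtain e where e: "e > 0" "ball w e \<subseteq> U" using open_contains_ball by blast
    have "w \<in> uhp - F" using w by (auto simp: hclosure_def)
    then obtain p where p: "p \<in> uhp" "dist p w < e" "sinv p \<in> F" using C e by blast
    have "p \<in> U" using p e by (auto simp: dist_commute)
    moreover have "p \<notin> F" using notF p by auto
    moreover have "gequiv G0 (sinv p) p" by (simp add: gequiv_G0)
    ultimately show "\<exists>p\<in>U. p \<in> uhp - F \<and> (\<exists>q\<in>F. gequiv G0 q p)" using p by blast
  qed
  have v: "\<not> (\<exists>G. open G \<and> G \<subseteq> uhp \<and> F \<subset> G \<and> no_equiv_pts G0 G)"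
  proof
    assume "\<exists>G. open G \<and> G \<subseteq> uhp \<and> F \<subset> G \<and> no_equiv_pts G0 G"
    then obtain G where G: "open G" "G \<subseteq> uhp" "F \<subset> G" "no_equiv_pts G0 G" by blast
    then obtain g where g: "g \<in> G" "g \<notin> F" by blast
    then obtain e where e: "e > 0" "ball g e \<subseteq> G" using G open_contains_ball by blast
    have "g \<in> uhp - F" using g G by auto
    then obtain p where p: "p \<in> uhp" "dist p g < e" "sinv p \<in> F" using C e by blast
    have pG: "p \<in> G" using p e by (auto simp: dist_commute)
    have "sinv p \<in> G" using p G by auto
    moreover have "p \<noteq> sinv p" using notF[of p] p by metis
    ultimately show False using G(4) pG unfolding no_equiv_pts_def gequiv_G0 by blast
  qed
  show ?thesis unfolding fund_conditions_def using Fu opF ii ii' iii iv v by blast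
qed

lemma neg_not_in_closure:
  fixes H :: "complex \<Rightarrow> real"
  assumes cont: "continuous_on uhp H" and p: "p \<in> uhp" "H p < 0"
  shows "p \<notin> closure {z\<in>uhp. H z > 0}"
proof
  assume pc: "p \<in> closure {z\<in>uhp. H z > 0}"
  have "isCont H p" using cont p open_uhp continuous_on_eq_continuous_at by blast
  then obtain d where d: "d > 0" "\<forall>x. dist x p < d \<longrightarrow> dist (H x) (H p) < - H p"
  proof -
    have "- H p > 0" using p by simp
    then show ?thesis using \<open>isCont H p\<close> that unfolding continuous_at_eps_delta by blast
  qed
  obtain q where q: "q \<in> {z\<in>uhp. H z > 0}" "dist q p < d"
    using pc d(1) unfolding closure_approachable by blast
  have "dist (H q) (H p) < - H p" using d q by auto
  then show False using q by (auto simp: dist_real_def)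
qed

lemma regular_from_H:
  fixes H :: "complex \<Rightarrow> real"
  assumes cont: "continuous_on uhp H"
    and anti: "\<forall>z\<in>uhp. H (sinv z) = - H z"
    and dense: "\<forall>z\<in>uhp. \<forall>e>0. \<exists>p\<in>uhp. dist p z < e \<and> H p \<noteq> 0"
  shows "fund_conditions G0 (uhp \<inter> interior (closure {z\<in>uhp. H z > 0}))"
    and "{z\<in>uhp. H z > 0} \<subseteq> uhp \<inter> interior (closure {z\<in>uhp. H z > 0})"
proof -
  define Q where "Q = {z\<in>uhp. H z > 0}"
  define F where "F = uhp \<inter> interior (closure Q)"
  have openQ: "open Q" unfolding Q_def
    using continuous_open_preimage[OF cont open_uhp, of "{0<..}"] by (auto simp: vimage_def Int_def)
  have "Q \<subseteq> interior (closure Q)" by (rule interior_maximal[OF closure_subset openQ])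
  moreover have "Q \<subseteq> uhp" by (auto simp: Q_def)
  ultimately have QF: "Q \<subseteq> F" unfolding F_def by blast
  have FQ: "F \<subseteq> closure Q" unfolding F_def using interior_subset by blast
  have clF: "closure F = closure Q"
  proof (rule subset_antisym)
    show "closure F \<subseteq> closure Q" using closure_mono[OF FQ] by simp
    show "closure Q \<subseteq> closure F" using closure_mono[OF QF] .
  qed
  have opF: "open F" unfolding F_def using open_uhp by auto
  have Fu: "F \<subseteq> uhp" unfolding F_def by auto
  have sc: "\<exists>d>0. \<forall>w. dist w a < d \<longrightarrow> dist (sinv w) (sinv a) < e \<and> w \<in> uhp"
    if au: "a \<in> uhp" and ep: "e > 0" for a e
  proof -
    obtain d1 where d1: "d1 > 0" "\<forall>w. dist w a < d1 \<longrightarrow> dist (sinv w) (sinv a) < e"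
      using isCont_sinv[OF au] ep unfolding continuous_at_eps_delta by blast
    obtain d2 where d2: "d2 > 0" "ball a d2 \<subseteq> uhp" using open_uhp au open_contains_ball by blast
    show ?thesis using d1 d2 by (intro exI[of _ "min d1 d2"]) (auto simp: dist_commute)
  qed
  have A: "\<forall>z\<in>F. sinv z \<notin> closure F"
  proof (intro ballI notI)
    fix z assume z: "z \<in> F" and sz: "sinv z \<in> closure F"
    have zu: "z \<in> uhp" using z Fu by auto
    obtain e where e: "e > 0" "ball z e \<subseteq> closure Q"
    proof -
      have "z \<in> interior (closure Q)" using z by (simp add: F_def)
      then obtain e where "e > 0" "ball z e \<subseteq> interior (closure Q)"
        using open_interior open_contains_ball by blast
      then show ?thesis using that interior_subset by blast
    qed
    obtain d where d: "d > 0" "\<forall>w. dist w (sinv z) < d \<longrightarrow> dist (sinv w) z < e \<and> w \<in> uhp"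
      using sc[of "sinv z" e] sinv_uhp[OF zu] e by auto
    obtain q where q: "q \<in> Q" "dist q (sinv z) < d"
      using sz d(1) unfolding clF closure_approachable by blast
    have qu: "q \<in> uhp" using q Q_def by auto
    have p: "sinv q \<in> uhp" "H (sinv q) < 0" using anti qu q(1) sinv_uhp[OF qu] by (auto simp: Q_def)
    have "sinv q \<in> closure Q" using d q e by (auto simp: dist_commute)
    then show False using neg_not_in_closure[OF cont p] unfolding Q_def by blast
  qed
  have B: "\<forall>z\<in>uhp - closure F. sinv z \<in> F"
  proof
    fix z assume z: "z \<in> uhp - closure F"
    then have zu: "z \<in> uhp" and zQ: "z \<notin> closure Q" using clF by auto
    obtain e1 where e1: "e1 > 0" "ball z e1 \<inter> Q = {}"
    proof -
      have "open (- closure Q)" by auto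
      then obtain e1 where "e1 > 0" "ball z e1 \<subseteq> - closure Q" using zQ open_contains_ball by blast
      moreover have "- closure Q \<subseteq> - Q" using closure_subset by blast
      ultimately show ?thesis using that by blast
    qed
    obtain e2 where e2: "e2 > 0" "ball z e2 \<subseteq> uhp" using open_uhp zu open_contains_ball by blast
    define e where "e = min e1 e2"
    have e: "e > 0" "ball z e \<inter> Q = {}" "ball z e \<subseteq> uhp" using e1 e2 by (auto simp: e_def)
    obtain d where d: "d > 0" "\<forall>w. dist w (sinv z) < d \<longrightarrow> dist (sinv w) z < e \<and> w \<in> uhp"
      using sc[of "sinv z" e] sinv_uhp[OF zu] e by auto
    have "ball (sinv z) d \<subseteq> closure Q"
    proof
      fix w assume w: "w \<in> ball (sinv z) d"
      then have wu: "w \<in> uhp" and sw: "dist (sinv w) z < e" using d by (auto simp: dist_commute)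
      show "w \<in> closure Q" unfolding closure_approachable
      proof (intro allI impI)
        fix eps :: real assume eps: "eps > 0"
        obtain r where r: "r > 0" "\<forall>u. dist u (sinv w) < r \<longrightarrow> dist (sinv u) w < eps \<and> u \<in> uhp"
          using sc[of "sinv w" eps] sinv_uhp[OF wu] eps by auto
        define r' where "r' = min r (e - dist (sinv w) z)"
        have r': "r' > 0" using r sw by (auto simp: r'_def)
        obtain u where u: "u \<in> uhp" "dist u (sinv w) < r'" "H u \<noteq> 0"
          using dense sinv_uhp[OF wu] r' by blast
        have "dist u z < e" using u(2) dist_triangle[of u z "sinv w"] by (auto simp: r'_def)
        then have "u \<in> ball z e" by (simp add: dist_commute)
        then have "u \<notin> Q" using e(2) by blast
        then have "H u < 0" using u by (auto simp: Q_def)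
        then have "sinv u \<in> Q" using anti u sinv_uhp[OF u(1)] by (auto simp: Q_def)
        moreover have "dist (sinv u) w < eps" using r u(2) by (auto simp: r'_def)
        ultimately show "\<exists>y\<in>Q. dist y w < eps" by blast
      qed
    qed
    then have "sinv z \<in> interior (closure Q)" using d(1) interior_maximal[OF _ open_ball] centre_in_ball by blast
    then show "sinv z \<in> F" using sinv_uhp[OF zu] by (simp add: F_def)
  qed
  have C: "\<forall>z\<in>uhp - F. \<forall>e>0. \<exists>p\<in>uhp. dist p z < e \<and> sinv p \<in> F"
  proof (intro ballI allI impI)
    fix z e assume z: "z \<in> uhp - F" and e: "(e::real) > 0"
    obtain e2 where e2: "e2 > 0" "ball z e2 \<subseteq> uhp" using open_uhp z open_contains_ball by blast
    have "z \<notin> interior (closure Q)" using z by (auto simp: F_def)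
    moreover have "z \<in> ball z (min e e2)" using e e2 by simp
    ultimately have "\<not> ball z (min e e2) \<subseteq> closure Q" using interior_maximal[OF _ open_ball] by blast
    then obtain w where w: "w \<in> ball z (min e e2)" "w \<notin> closure Q" by blast
    have wu: "w \<in> uhp" using w e2 by auto
    have "sinv w \<in> F" using B wu w clF by auto
    then show "\<exists>p\<in>uhp. dist p z < e \<and> sinv p \<in> F" using wu w by (intro bexI[of _ w]) (auto simp: dist_commute)
  qed
  show "fund_conditions G0 (uhp \<inter> interior (closure {z\<in>uhp. H z > 0}))"
    using fund_from[OF opF Fu A B C] unfolding F_def Q_def .
  show "{z\<in>uhp. H z > 0} \<subseteq> uhp \<inter> interior (closure {z\<in>uhp. H z > 0})"
    using QF unfolding F_def Q_def .
qed

definition qr :: "nat \<Rightarrow> real" where "qr k = of_rat (from_nat k)"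
definition rr :: "nat \<Rightarrow> real" where "rr k = (1/2)^k"
definition U1 :: "real set" where
  "U1 = (\<Union>k. ball (qr k) (rr k)) \<union> (\<Union>k. ball (- qr k) (rr k))"
definition K1 :: "real set" where "K1 = - U1"
definition dl :: "real \<Rightarrow> real" where "dl s = infdist s K1"
definition gg :: "real \<Rightarrow> real" where "gg v = v * sin (1 / v)"
definition hh :: "real \<Rightarrow> real" where "hh s = s * gg (dl s)"

lemma rr_pos: "rr k > 0" by (simp add: rr_def)

lemma open_U1: "open U1" unfolding U1_def by auto
lemma closed_K1: "closed K1" unfolding K1_def using open_U1 by auto

lemma U1_uminus: "s \<in> U1 \<Longrightarrow> - s \<in> U1"
  unfolding U1_def by (auto simp: dist_real_def abs_minus_commute) (smt (verit))+

lemma K1_uminus: "s \<in> K1 \<Longrightarrow> - s \<in> K1"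
  unfolding K1_def using U1_uminus[of "-s"] by auto

lemma Rats_U1: "x \<in> \<rat> \<Longrightarrow> x \<in> U1"
proof -
  assume "x \<in> \<rat>"
  then obtain y where y: "x = of_rat y" by (auto elim: Rats_cases)
  have "qr (to_nat y) = x" by (simp add: qr_def y)
  then have "x \<in> ball (qr (to_nat y)) (rr (to_nat y))" using rr_pos by simp
  then show ?thesis unfolding U1_def by blast
qed

lemma zero_U1: "0 \<in> U1" using Rats_U1 by simp

lemma U1_dense: "a < b \<Longrightarrow> \<exists>c\<in>U1. a < c \<and> c < b"
  using Rats_dense_in_real Rats_U1 by blast

lemma sum_rr: "(\<Sum>k. ennreal (2 * rr k)) = ennreal 4"
proof -
  have "(\<lambda>k. 2 * rr k) sums (2 * (1 / (1 - 1/2)))"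
    unfolding rr_def by (intro sums_mult geometric_sums) simp
  then show ?thesis by (subst suminf_ennreal_eq[where x=4]) (auto simp: rr_def)
qed

lemma emeasure_ball_real: "emeasure lborel (ball (c::real) r) = ennreal (2 * r)" if "r > 0"
  using that by (simp add: ball_eq_greaterThanLessThan)

lemma emeasure_U1: "emeasure lborel U1 \<le> ennreal 8"
proof -
  have "emeasure lborel (\<Union>k. ball (qr k) (rr k)) \<le> (\<Sum>k. emeasure lborel (ball (qr k) (rr k)))"
    by (rule emeasure_subadditive_countably) auto
  also have "\<dots> = ennreal 4" using sum_rr by (simp add: emeasure_ball_real rr_pos)
  finally have 1: "emeasure lborel (\<Union>k. ball (qr k) (rr k)) \<le> ennreal 4" .
  have "emeasure lborel (\<Union>k. ball (- qr k) (rr k)) \<le> (\<Sum>k. emeasure lborel (ball (- qr k) (rr k)))"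
    by (rule emeasure_subadditive_countably) auto
  also have "\<dots> = ennreal 4" using sum_rr by (simp add: emeasure_ball_real rr_pos)
  finally have 2: "emeasure lborel (\<Union>k. ball (- qr k) (rr k)) \<le> ennreal 4" .
  have "emeasure lborel U1 \<le> emeasure lborel (\<Union>k. ball (qr k) (rr k)) + emeasure lborel (\<Union>k. ball (- qr k) (rr k))"
    unfolding U1_def by (rule emeasure_subadditive) auto
  also have "\<dots> \<le> ennreal 4 + ennreal 4" using 1 2 by (rule add_mono)
  finally show ?thesis by (simp flip: ennreal_plus)
qed

lemma K1_ne: "K1 \<noteq> {}"
proof
  assume "K1 = {}"
  then have "U1 = UNIV" unfolding K1_def by auto
  then show False using emeasure_U1 by (simp add: emeasure_lborel_UNIV top_unique)
qed

lemma dl_nonneg: "dl s \<ge> 0" by (simp add: dl_def infdist_nonneg)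

lemma dl_zero_iff: "dl s = 0 \<longleftrightarrow> s \<in> K1"
  using in_closed_iff_infdist_zero[OF closed_K1 K1_ne] by (simp add: dl_def)

lemma dl_pos_U1: "dl s > 0 \<Longrightarrow> s \<in> U1"
  using dl_zero_iff[of s] by (auto simp: K1_def)

lemma U1_dl_pos: "s \<in> U1 \<Longrightarrow> dl s > 0"
  using dl_zero_iff[of s] dl_nonneg[of s] by (auto simp: K1_def)

lemma isCont_dl: "isCont dl s"
  unfolding dl_def by (intro continuous_infdist continuous_ident)

lemma dl_lip: "dl a \<le> dl b + dist a b"
  unfolding dl_def by (rule infdist_triangle)

lemma dl_uminus: "dl (- s) = dl s"
proof -
  have "(\<lambda>a. dist (- s) a) ` K1 = (\<lambda>a. dist s a) ` K1"
  proof (intro set_eqI iffI)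
    fix x assume "x \<in> (\<lambda>a. dist (- s) a) ` K1"
    then obtain a where a: "a \<in> K1" "x = dist (-s) a" by auto
    then have "x = dist s (-a)" by (simp add: dist_real_def)
    then show "x \<in> (\<lambda>a. dist s a) ` K1" using K1_uminus[OF a(1)] by auto
  next
    fix x assume "x \<in> (\<lambda>a. dist s a) ` K1"
    then obtain a where a: "a \<in> K1" "x = dist s a" by auto
    then have "x = dist (-s) (-a)" by (simp add: dist_real_def)
    then show "x \<in> (\<lambda>a. dist (- s) a) ` K1" using K1_uminus[OF a(1)] by auto
  qed
  then show ?thesis unfolding dl_def infdist_def by simp
qed

lemma isCont_gg: "isCont gg v"
proof (cases "v = 0")
  case False
  then show ?thesis unfolding gg_def by (intro continuous_intros) auto
next
  case True
  show ?thesis unfolding continuous_at_eps_delta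
  proof (intro allI impI)
    fix e :: real assume e: "e > 0"
    have "\<bar>x * sin (1/x)\<bar> < e" if "dist x 0 < e" for x
    proof -
      have "\<bar>x * sin (1/x)\<bar> = \<bar>x\<bar> * \<bar>sin (1/x)\<bar>" by (simp add: abs_mult)
      also have "\<dots> \<le> \<bar>x\<bar>" using abs_sin_le_one[of "1/x"] by (simp add: mult_left_le)
      finally show ?thesis using that by simp
    qed
    then show "\<exists>d>0. \<forall>x'. dist x' v < d \<longrightarrow> dist (gg x') (gg v) < e"
      using e True by (intro exI[of _ e]) (auto simp: gg_def dist_real_def)
  qed
qed

lemma isCont_hh: "isCont hh s"
proof -
  have "isCont (\<lambda>s. gg (dl s)) s"
    using isCont_o2[OF isCont_dl isCont_gg] by simp
  then show ?thesis unfolding hh_def by (intro continuous_intros)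
qed

lemma hh_odd: "hh (- s) = - hh s"
  by (simp add: hh_def dl_uminus)

lemma sin_add_nat_2pi: "sin (x + real m * (2 * pi)) = sin x"
proof (induction m)
  case 0 then show ?case by simp
next
  case (Suc m)
  have "x + real (Suc m) * (2 * pi) = (x + real m * (2 * pi)) + 2 * pi" by (simp add: algebra_simps)
  then show ?case using Suc by (simp only: sin_periodic)
qed

lemma hh_dense: "e > 0 \<Longrightarrow> \<exists>t. \<bar>t - s\<bar> < e \<and> hh t \<noteq> 0"
proof -
  assume e: "e > 0"
  obtain a b where ab: "a < b" "0 \<notin> {a<..<b}" "{a<..<b} \<subseteq> {s - e<..<s + e}"
  proof (cases "s \<ge> 0")
    case True then show ?thesis using e by (intro that[of s "s+e"]) auto
  next
    case False then show ?thesis using e by (intro that[of "s-e" s]) auto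
  qed
  obtain c where c: "c \<in> U1" "a < c" "c < b" using U1_dense[OF ab(1)] by blast
  have c0: "c \<noteq> 0" using c ab(2) by auto
  have cs: "\<bar>c - s\<bar> < e" using c ab(3) by (auto simp: subset_iff abs_less_iff)
  define v0 where "v0 = dl c"
  have v0: "v0 > 0" using U1_dl_pos[OF c(1)] by (simp add: v0_def)
  show ?thesis
  proof (cases "sin (1 / v0) = 0")
    case False
    then have "hh c \<noteq> 0" using c0 v0 by (simp add: hh_def gg_def v0_def)
    then show ?thesis using cs by (intro exI[of _ c]) auto
  next
    case True
    then obtain k :: int where k: "1 / v0 = k * pi" using sin_zero_iff_int2 by blast
    obtain k0 where k0: "k0 \<in> K1" "infdist c K1 = dist c k0"
      using infdist_attains_inf[OF closed_K1 K1_ne] by blast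
    have dk0: "dist c k0 = v0" using k0 by (simp add: v0_def dl_def)
    define sg where "sg = (if k0 < c then -1 else (1::real))"
    have "isCont (\<lambda>t. 1 / (v0 - t)) 0" using v0 by (intro continuous_intros) auto
    then obtain d where d: "d > 0" "\<forall>t. dist t 0 < d \<longrightarrow> dist (1 / (v0 - t)) (1 / (v0 - 0)) < pi"
      unfolding continuous_at_eps_delta using pi_gt_zero by blast
    define t where "t = min (min d v0) (min (c - a) (b - c)) / 2"
    have t: "0 < t" "t < d" "t < v0" "t < c - a" "t < b - c"
      using d v0 c by (auto simp: t_def)
    define ct where "ct = c + sg * t"
    have ctJ: "a < ct" "ct < b" using t by (auto simp: ct_def sg_def)
    have "dist ct k0 = v0 - t" using dk0 t by (auto simp: ct_def sg_def dist_real_def)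
    moreover have "dl ct \<le> dist ct k0" unfolding dl_def using k0(1) by (rule infdist_le)
    moreover have "dl c \<le> dl ct + dist c ct" by (rule dl_lip)
    moreover have "dist c ct = t" using t by (auto simp: ct_def sg_def dist_real_def)
    ultimately have dct: "dl ct = v0 - t" by (simp add: v0_def)
    have "sin (1 / (v0 - t)) \<noteq> 0"
    proof
      assume "sin (1 / (v0 - t)) = 0"
      then obtain i :: int where i: "1 / (v0 - t) = i * pi" using sin_zero_iff_int2 by blast
      have lt: "1 / v0 < 1 / (v0 - t)" using t v0 by (simp add: frac_less2)
      have "dist (1 / (v0 - t)) (1 / v0) < pi" using d t by auto
      then have "1 / (v0 - t) < 1 / v0 + pi" using lt by (simp add: dist_real_def)
      then have "i * pi < k * pi + pi" "k * pi < i * pi" using i k lt by auto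
      then have "(real_of_int i - real_of_int k) * pi < 1 * pi" "real_of_int k < real_of_int i"
        using pi_gt_zero by (simp_all add: algebra_simps)
      then have "real_of_int i - real_of_int k < 1" "k < i"
        using pi_gt_zero mult_right_less_imp_less[of _ pi 1] by auto
      then show False by linarith
    qed
    moreover have "ct \<noteq> 0" using ctJ ab(2) by auto
    moreover have "v0 - t \<noteq> 0" using t by simp
    ultimately have "hh ct \<noteq> 0" by (simp add: hh_def gg_def dct)
    moreover have "\<bar>ct - s\<bar> < e" using ctJ ab(3) by (auto simp: subset_iff abs_less_iff)
    ultimately show ?thesis by blast
  qed
qed

lemma sin_3pi2: "sin (3 * pi / 2) = - 1"
proof -
  have "3 * pi / 2 = pi / 2 + pi" by simp
  then show ?thesis by (simp only: sin_periodic_pi) simp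
qed

lemma hh_neg_near_K: "dl s = 0 \<Longrightarrow> e > 0 \<Longrightarrow> \<exists>t. \<bar>t - s\<bar> < e \<and> hh t < 0"
proof -
  assume s: "dl s = 0" and e: "e > 0"
  have s0: "s \<noteq> 0" using s U1_dl_pos[OF zero_U1] by auto
  define e' where "e' = min e \<bar>s\<bar>"
  have e': "e' > 0" using e s0 by (simp add: e'_def)
  obtain c where c: "c \<in> U1" "\<bar>c - s\<bar> < e'"
    using U1_dense[of "s - e'" "s + e'"] e' by (auto simp: abs_less_iff)
  define v1 where "v1 = dl c"
  have v1: "v1 > 0" using U1_dl_pos[OF c(1)] by (simp add: v1_def)
  define m where "m = nat \<lceil>1 / v1\<rceil>"
  have m: "1 / v1 \<le> real m" unfolding m_def by linarith
  define th where "th = (if s > 0 then 3 * pi / 2 else pi / 2)"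
  define v where "v = 1 / (real m * (2 * pi) + th)"
  have th: "th > 0" using pi_gt_zero by (simp add: th_def)
  have den: "real m * (2*pi) + th > 1 / v1"
  proof -
    have "real m * (2*pi) \<ge> real m" using pi_gt_zero pi_ge_two by (simp add: mult_le_cancel_left1) 
    then show ?thesis using m th by linarith
  qed
  have vpos: "v > 0" using th by (simp add: v_def add_nonneg_pos)
  have vlt: "v < v1"
  proof -
    have "1 / v1 > 0" using v1 by simp
    have "real m * (2*pi) + th > 0" using th by (simp add: add_nonneg_pos)
    then have "1 / (real m * (2*pi) + th) < 1 / (1 / v1)" using den \<open>real m * (2*pi) + th > 0\<close> v1 by (intro divide_strict_left_mono) auto
    then show ?thesis using v1 by (simp add: v_def)
  qed
  have sinv: "sin (1 / v) = sin th" unfolding v_def using sin_add_nat_2pi[of th m] by (simp add: add.commute)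
  obtain t where t: "dl t = v" "\<bar>t - s\<bar> \<le> \<bar>c - s\<bar>"
  proof (cases "s \<le> c")
    case True
    have "\<exists>x\<ge>s. x \<le> c \<and> dl x = v"
      by (rule IVT) (use s vpos vlt v1_def True isCont_dl in auto)
    then show ?thesis using that True by force
  next
    case False
    have "\<exists>x\<ge>c. x \<le> s \<and> dl x = v"
      by (rule IVT2) (use s vpos vlt v1_def False isCont_dl in auto)
    then show ?thesis using that False by force
  qed
  have ts: "\<bar>t - s\<bar> < e" "\<bar>t - s\<bar> < \<bar>s\<bar>" using t c by (auto simp: e'_def)
  have "hh t < 0"
  proof (cases "s > 0")
    case True
    then have "t > 0" using ts by linarith
    moreover have "sin (1/v) = -1" using True by (simp add: sinv th_def sin_3pi2)
    ultimately show ?thesis using vpos by (simp add: hh_def gg_def t(1))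
  next
    case False
    then have "s < 0" using s0 by simp
    then have "t < 0" using ts by linarith
    moreover have "sin (1/v) = 1" using False by (simp add: sinv th_def)
    ultimately show ?thesis using vpos by (simp add: hh_def gg_def t(1) mult_neg_pos)
  qed
  then show ?thesis using ts by blast
qed

definition Phi :: "complex \<Rightarrow> real" where
  "Phi z = Re z * (1 + (Re z)^2 + (Im z)^2)^2 / (Im z)^3"
definition w0 :: "real \<Rightarrow> real" where "w0 y = (1 + y^2)^2 / y^3"
definition H2 :: "complex \<Rightarrow> real" where "H2 z = hh (Phi z)"
definition H1 :: "complex \<Rightarrow> real" where "H1 z = Re z / cmod z"

lemma w0_pos: "y > 0 \<Longrightarrow> w0 y > 0" proof -
  assume y: "y > 0"
  have "1 + y^2 > 0" by (simp add: add_pos_nonneg)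
  then show ?thesis unfolding w0_def using y by (intro divide_pos_pos) auto
qed

lemma alg_Phi: "(r::real) \<noteq> 0 \<Longrightarrow> y \<noteq> 0 \<Longrightarrow> (- x / r) * (A / r)^2 / (y / r)^3 = - (x * A^2 / y^3)"
  by (simp add: power_divide) (simp add: field_simps power2_eq_square power3_eq_cube)

lemma Phi_sinv: "z \<in> uhp \<Longrightarrow> Phi (sinv z) = - Phi z"
proof -
  assume "z \<in> uhp"
  then have y: "Im z > 0" by (simp add: uhp_iff)
  define x where "x = Re z"
  define y where "y = Im z"
  have r: "x^2 + y^2 > 0" using y by (simp add: y_def add_nonneg_pos)
  have "Phi (sinv z) = (- x / (x^2+y^2)) * (1 + (x / (x^2+y^2))^2 + (y / (x^2+y^2))^2)^2 / (y / (x^2+y^2))^3"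
    by (simp add: Phi_def Re_sinv Im_sinv x_def y_def)
  also have "1 + (x / (x^2+y^2))^2 + (y / (x^2+y^2))^2 = (1 + x^2 + y^2) / (x^2+y^2)"
  proof -
    define r where "r = x^2 + y^2"
    have r0: "r \<noteq> 0" using r unfolding r_def by linarith
    have "(x / r)^2 + (y / r)^2 = (x^2 + y^2) / r^2" by (simp add: power_divide add_divide_distrib)
    also have "\<dots> = r / r^2" by (simp add: r_def)
    finally have "(x / r)^2 + (y / r)^2 = r / r^2" .
    also have "\<dots> = 1 / r" using r0 by (simp add: power2_eq_square)
    finally have "1 + (x / r)^2 + (y / r)^2 = 1 + 1 / r" by (simp add: add.assoc)
    also have "1 + 1 / r = (1 + r) / r" using r0 by (simp add: add_divide_distrib)
    finally have "1 + (x / r)^2 + (y / r)^2 = (1 + r) / r" .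
    then show ?thesis by (simp add: r_def add.assoc)
  qed
  finally have "Phi (sinv z) = (- x / (x^2+y^2)) * ((1 + x^2 + y^2) / (x^2+y^2))^2 / (y / (x^2+y^2))^3" .
  also have "\<dots> = - (x * (1 + x^2 + y^2)^2 / y^3)"
    using r y by (intro alg_Phi) (auto simp: y_def)
  finally show ?thesis by (simp add: Phi_def x_def y_def)
qed

lemma Phi_Complex: "Phi (Complex x y) = x * (1 + x^2 + y^2)^2 / y^3"
  by (simp add: Phi_def)

lemma Phi_mono:
  assumes y: "y > 0" and x: "x1 \<le> x2"
  shows "Phi (Complex x2 y) - Phi (Complex x1 y) \<ge> w0 y * (x2 - x1)"
proof -
  define g where "g x = x * (1 + x^2 + y^2)^2 / y^3 - w0 y * x" for x
  have "g x1 \<le> g x2"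
  proof (rule DERIV_nonneg_imp_nondecreasing[OF x])
    fix x assume "x1 \<le> x" "x \<le> x2"
    have D: "(g has_real_derivative
       ((1 + x^2 + y^2)^2 + x * (2 * (1 + x^2 + y^2) * (2 * x))) / y^3 - w0 y) (at x)"
      using y unfolding g_def by (auto intro!: derivative_eq_intros simp: field_simps power2_eq_square)
    have 1: "(1 + y^2)^2 \<le> (1 + x^2 + y^2)^2" by (intro power_mono) auto
    have 2: "0 \<le> x * (2 * (1 + x^2 + y^2) * (2 * x))"
    proof -
      have "x * (2 * (1 + x^2 + y^2) * (2 * x)) = 4 * x^2 * (1 + x^2 + y^2)" by (simp add: power2_eq_square algebra_simps)
      then show ?thesis by (simp add: add_nonneg_nonneg)
    qed
    have "(1 + y^2)^2 \<le> (1 + x^2 + y^2)^2 + x * (2 * (1 + x^2 + y^2) * (2 * x))"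
      using add_mono[OF 1 2] by simp
    then have "(1 + y^2)^2 / y^3 \<le> ((1 + x^2 + y^2)^2 + x * (2 * (1 + x^2 + y^2) * (2 * x))) / y^3"
      using y by (intro divide_right_mono) auto
    then show "\<exists>d. (g has_real_derivative d) (at x) \<and> 0 \<le> d" using D by (intro exI[of _ _]) (auto simp: w0_def)
  qed
  then show ?thesis by (simp add: g_def Phi_Complex algebra_simps)
qed

lemma cont_Phi_line: "y > 0 \<Longrightarrow> continuous_on S (\<lambda>x. Phi (Complex x y))"
  unfolding Phi_Complex by (intro continuous_intros) auto

lemma Phi_horiz:
  assumes y: "y > 0" and eta: "eta > 0" and t: "\<bar>t - Phi (Complex x y)\<bar> < w0 y * eta"
  shows "\<exists>x'. \<bar>x' - x\<bar> \<le> eta \<and> Phi (Complex x' y) = t"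
proof -
  have a: "Phi (Complex (x - eta) y) \<le> t"
    using Phi_mono[OF y, of "x - eta" x] eta t by (auto simp: abs_less_iff)
  have b: "t \<le> Phi (Complex (x + eta) y)"
    using Phi_mono[OF y, of x "x + eta"] eta t by (auto simp: abs_less_iff)
  obtain x' where "x' \<ge> x - eta" "x' \<le> x + eta" "Phi (Complex x' y) = t"
    using IVT'[of "\<lambda>x. Phi (Complex x y)", OF a b _ cont_Phi_line[OF y]] eta by auto
  then show ?thesis by (intro exI[of _ x']) auto
qed

lemma cont_Phi: "continuous_on uhp Phi"
  unfolding Phi_def uhp_def by (intro continuous_intros) auto

lemma cont_H2: "continuous_on uhp H2"
proof -
  have "continuous_on (Phi ` uhp) hh" using isCont_hh by (simp add: continuous_at_imp_continuous_on)
  then show ?thesis unfolding H2_def using continuous_on_compose[OF cont_Phi] by (simp add: comp_def)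
qed

lemma H2_anti: "\<forall>z\<in>uhp. H2 (sinv z) = - H2 z"
  by (simp add: H2_def Phi_sinv hh_odd[symmetric])

lemma near_line:
  assumes z: "z \<in> uhp" and e: "e > 0"
    and P: "\<And>eps. eps > 0 \<Longrightarrow> \<exists>t. \<bar>t - Phi z\<bar> < eps \<and> R t"
  shows "\<exists>p\<in>uhp. dist p z < e \<and> R (Phi p)"
proof -
  define y where "y = Im z"
  have y: "y > 0" using z by (simp add: uhp_iff y_def)
  obtain t where t: "\<bar>t - Phi z\<bar> < w0 y * (e/2)" "R t" using P[of "w0 y * (e/2)"] w0_pos[OF y] e by auto
  have zc: "z = Complex (Re z) y" by (simp add: y_def complex_eq_iff)
  obtain x' where x': "\<bar>x' - Re z\<bar> \<le> e/2" "Phi (Complex x' y) = t"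
    using Phi_horiz[OF y, of "e/2" t "Re z"] e t zc by auto
  have "Complex x' y - z = of_real (x' - Re z)" by (simp add: complex_eq_iff y_def)
  have "dist (Complex x' y) z = cmod (complex_of_real (x' - Re z))" unfolding dist_norm \<open>Complex x' y - z = of_real (x' - Re z)\<close> ..
  then have "dist (Complex x' y) z = \<bar>x' - Re z\<bar>" by (metis norm_of_real of_real_diff real_norm_def)
  then have "dist (Complex x' y) z < e" using x' e by simp
  moreover have "Complex x' y \<in> uhp" using y by (simp add: uhp_iff)
  ultimately show ?thesis using x' t by blast
qed

lemma H2_dense: "\<forall>z\<in>uhp. \<forall>e>0. \<exists>p\<in>uhp. dist p z < e \<and> H2 p \<noteq> 0"
  unfolding H2_def using near_line[where R="\<lambda>t. hh t \<noteq> 0"] hh_dense by blast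

lemma F2_sub:
  "uhp \<inter> interior (closure {z\<in>uhp. H2 z > 0}) \<subseteq> {z\<in>uhp. Phi z \<in> U1}"
proof
  fix z assume z: "z \<in> uhp \<inter> interior (closure {z\<in>uhp. H2 z > 0})"
  show "z \<in> {z\<in>uhp. Phi z \<in> U1}"
  proof (rule ccontr)
    assume "z \<notin> {z\<in>uhp. Phi z \<in> U1}"
    then have "Phi z \<in> K1" using z by (auto simp: K1_def)
    then have d0: "dl (Phi z) = 0" by (simp add: dl_zero_iff)
    obtain e where e: "e > 0" "ball z e \<subseteq> closure {z\<in>uhp. H2 z > 0}"
    proof -
      have "z \<in> interior (closure {z\<in>uhp. H2 z > 0})" using z by blast
      then obtain e where "e > 0" "ball z e \<subseteq> interior (closure {z\<in>uhp. H2 z > 0})"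
        using open_interior open_contains_ball by blast
      then show ?thesis using that interior_subset by blast
    qed
    obtain p where p: "p \<in> uhp" "dist p z < e" "hh (Phi p) < 0"
      using near_line[OF _ e(1), where R="\<lambda>t. hh t < 0"] z hh_neg_near_K[OF d0] by blast
    have "p \<in> closure {z\<in>uhp. H2 z > 0}" using p e by (auto simp: dist_commute)
    moreover have "p \<notin> closure {z\<in>uhp. H2 z > 0}"
      using neg_not_in_closure[OF cont_H2 p(1)] p(3) by (simp add: H2_def)
    ultimately show False by blast
  qed
qed

lemma H1_anti: "\<forall>z\<in>uhp. H1 (sinv z) = - H1 z"
proof
  fix z assume "z \<in> uhp"
  then have z0: "z \<noteq> 0" by (auto simp: uhp_iff)
  have c: "cmod z > 0" using z0 by simp
  have "cmod (sinv z) = 1 / cmod z" by (simp add: sinv_def norm_divide)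
  moreover have "Re (sinv z) = - Re z / (cmod z)^2"
    by (simp add: Re_sinv cmod_power2)
  ultimately have "H1 (sinv z) = (- Re z / (cmod z)^2) / (1 / cmod z)" by (simp add: H1_def)
  also have "\<dots> = - Re z / cmod z" using c by (simp add: field_simps power2_eq_square)
  finally show "H1 (sinv z) = - H1 z" by (simp add: H1_def)
qed

lemma cont_H1: "continuous_on uhp H1"
  unfolding H1_def uhp_def by (intro continuous_intros) auto

lemma H1_dense: "\<forall>z\<in>uhp. \<forall>e>0. \<exists>p\<in>uhp. dist p z < e \<and> H1 p \<noteq> 0"
proof (intro ballI allI impI)
  fix z :: complex and e :: real assume z: "z \<in> uhp" and e: "e > 0"
  show "\<exists>p\<in>uhp. dist p z < e \<and> H1 p \<noteq> 0"
  proof (cases "Re z = 0")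
    case False
    then show ?thesis using z e by (intro bexI[of _ z]) (auto simp: H1_def)
  next
    case True
    define p where "p = z + of_real (e/2)"
    have "Re p \<noteq> 0" "Im p = Im z" using True e by (auto simp: p_def)
    moreover have "dist p z < e" using e by (simp add: p_def dist_norm)
    ultimately show ?thesis using z by (intro bexI[of _ p]) (auto simp: H1_def uhp_iff)
  qed
qed

definition cpx :: "real \<times> real \<Rightarrow> complex" where "cpx p = Complex (fst p) (snd p)"

lemma cont_cpx: "continuous_on UNIV cpx"
proof -
  have "cpx = (\<lambda>p. complex_of_real (fst p) + \<i> * complex_of_real (snd p))"
    by (auto simp: cpx_def fun_eq_iff complex_eq_iff)
  show ?thesis unfolding \<open>cpx = _\<close> by (intro continuous_intros)
qed

lemma meas_cpx[measurable]: "cpx \<in> borel_measurable borel"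
  using cont_cpx by (rule borel_measurable_continuous_onI)

lemma lborel_complex: "distr lborel borel cpx = lborel"
proof (rule lborel_eqI[symmetric])
  show "sets (distr lborel borel cpx) = sets borel" by simp
  fix l u :: complex
  assume lu: "\<And>b. b \<in> Basis \<Longrightarrow> l \<bullet> b \<le> u \<bullet> b"
  have le: "Re l \<le> Re u" "Im l \<le> Im u" using lu[of 1] lu[of "\<i>"] by (auto simp: Basis_complex_def)
  have pre: "cpx -` box l u = box (Re l) (Re u) \<times> box (Im l) (Im u)"
    by (auto simp: cpx_def box_def Basis_complex_def inner_complex_def)
  have "emeasure (distr lborel borel cpx) (box l u) = emeasure lborel (cpx -` box l u \<inter> space lborel)"
    by (rule emeasure_distr) auto
  also have "\<dots> = emeasure (lborel \<Otimes>\<^sub>M lborel) (box (Re l) (Re u) \<times> box (Im l) (Im u))"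
    by (simp add: pre lborel_prod)
  also have "\<dots> = emeasure lborel (box (Re l) (Re u)) * emeasure lborel (box (Im l) (Im u))"
    by (rule lborel.emeasure_pair_measure_Times) auto
  also have "\<dots> = ennreal ((Re u - Re l) * (Im u - Im l))"
    using le by (simp add: ennreal_mult)
  also have "(Re u - Re l) * (Im u - Im l) = (\<Prod>b\<in>Basis. (u - l) \<bullet> b)"
    by (simp add: Basis_complex_def inner_complex_def)
  finally show "emeasure (distr lborel borel cpx) (box l u) = (\<Prod>b\<in>Basis. (u - l) \<bullet> b)" .
qed

definition rho :: "complex \<Rightarrow> ennreal" where
  "rho z = (if Im z > 0 then ennreal (1 / (Im z)^2) else 0)"

lemma meas_rho[measurable]: "rho \<in> borel_measurable borel"
  unfolding rho_def by measurable

lemma hyp_area_tonelli: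
  assumes A: "A \<in> sets borel"
  shows "emeasure hyp_area A =
    (\<integral>\<^sup>+ y. \<integral>\<^sup>+ x. rho (Complex x y) * indicator A (Complex x y) \<partial>lborel \<partial>lborel)"
proof -
  have "hyp_area = density lborel rho" unfolding hyp_area_def rho_def by simp
  then have "emeasure hyp_area A = emeasure (density lborel rho) A" by simp
  also have "\<dots> = (\<integral>\<^sup>+ z. rho z * indicator A z \<partial>lborel)"
    using A by (subst emeasure_density) auto
  also have "\<dots> = (\<integral>\<^sup>+ z. rho z * indicator A z \<partial>(distr lborel borel cpx))"
    by (simp add: lborel_complex)
  also have "\<dots> = (\<integral>\<^sup>+ p. rho (cpx p) * indicator A (cpx p) \<partial>lborel)"
    using A by (intro nn_integral_distr) auto
  also have "\<dots> = (\<integral>\<^sup>+ p. rho (cpx p) * indicator A (cpx p) \<partial>(lborel \<Otimes>\<^sub>M lborel))"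
    by (simp add: lborel_prod)
  also have "\<dots> = (\<integral>\<^sup>+ y. \<integral>\<^sup>+ x. rho (cpx (x, y)) * indicator A (cpx (x, y)) \<partial>lborel \<partial>lborel)"
    using A by (intro lborel_pair.nn_integral_snd[symmetric]) (simp add: lborel_prod)
  finally show ?thesis by (simp add: cpx_def)
qed

lemma int_inv_finite: "(\<integral>\<^sup>+ y. ennreal (inverse (1 + y^2)) \<partial>lborel) < \<infinity>"
proof -
  have "integrable lborel (\<lambda>x. inverse (1 + x^2) :: real)"
    using integrable_inverse_1_plus_square by (simp add: set_integrable_def einterval_def)
  then have "(\<integral>\<^sup>+ x. ennreal (norm (inverse (1 + x^2) :: real)) \<partial>lborel) < \<infinity>"
    by (simp add: integrable_iff_bounded)
  moreover have "norm (inverse (1 + x^2) :: real) = inverse (1 + x^2)" for x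
    by (simp add: add_pos_nonneg)
  ultimately show ?thesis by simp
qed

lemma diam_measure:
  fixes S :: "real set"
  assumes "\<forall>a\<in>S. \<forall>b\<in>S. \<bar>a - b\<bar> \<le> d"
  shows "emeasure lborel S \<le> ennreal (2 * d)"
proof (cases "S = {}")
  case True then show ?thesis by simp
next
  case False
  then obtain a0 where a0: "a0 \<in> S" by blast
  have d: "d \<ge> 0" using assms a0 by force
  have "S \<subseteq> {a0 - d .. a0 + d}" using assms a0 by (auto simp: abs_le_iff) (smt (verit))+
  then have "emeasure lborel S \<le> emeasure lborel {a0 - d .. a0 + d}" by (intro emeasure_mono) auto
  also have "\<dots> = ennreal (2 * d)" using d by simp
  finally show ?thesis .
qed

lemma open_slice: "y > 0 \<Longrightarrow> open T \<Longrightarrow> open {x. Phi (Complex x y) \<in> T}"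
  using continuous_open_preimage[OF cont_Phi_line[of y UNIV] open_UNIV, of T] by (simp add: vimage_def)

lemma meas_slice: "y > 0 \<Longrightarrow> open T \<Longrightarrow> {x. Phi (Complex x y) \<in> T} \<in> sets lborel"
  using open_slice by (simp add: borel_open)

lemma meas_slice_UN: "y > 0 \<Longrightarrow> (\<And>k. open (T k)) \<Longrightarrow> (\<Union>k. {x. Phi (Complex x y) \<in> T k}) \<in> sets lborel"
proof -
  assume "y > 0" "\<And>k. open (T k)"
  then have "open (\<Union>k. {x. Phi (Complex x y) \<in> T k})" using open_slice by blast
  then show ?thesis by (simp add: borel_open)
qed

lemma slice_ball:
  assumes y: "y > 0" and r: "r > 0"
  shows "emeasure lborel {x. Phi (Complex x y) \<in> ball c r} \<le> ennreal (2 * (2 * r / w0 y))"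
proof (rule diam_measure, intro ballI)
  have w: "w0 y > 0" using w0_pos[OF y] .
  have *: "b - a \<le> 2 * r / w0 y" if "a \<le> b" "a \<in> {x. Phi (Complex x y) \<in> ball c r}" "b \<in> {x. Phi (Complex x y) \<in> ball c r}" for a b
  proof -
    have "w0 y * (b - a) \<le> Phi (Complex b y) - Phi (Complex a y)" using Phi_mono[OF y that(1)] .
    also have "\<dots> < 2 * r" using that(2,3) by (auto simp: dist_real_def)
    finally show ?thesis using w by (simp add: field_simps)
  qed
  fix a b assume "a \<in> {x. Phi (Complex x y) \<in> ball c r}" "b \<in> {x. Phi (Complex x y) \<in> ball c r}"
  then show "\<bar>a - b\<bar> \<le> 2 * r / w0 y" using *[of a b] *[of b a] by (cases "a \<le> b") auto
qed

lemma slice_union: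
  assumes y: "y > 0" and cc: "\<And>k. True"
  shows "emeasure lborel (\<Union>k. {x. Phi (Complex x y) \<in> ball (c k) (rr k)}) \<le> ennreal (8 / w0 y)"
proof -
  have w: "w0 y > 0" using w0_pos[OF y] .
  have "emeasure lborel (\<Union>k. {x. Phi (Complex x y) \<in> ball (c k) (rr k)})
      \<le> (\<Sum>k. emeasure lborel {x. Phi (Complex x y) \<in> ball (c k) (rr k)})"
    by (rule emeasure_subadditive_countably) (use meas_slice[OF y open_ball] in blast)
  also have "\<dots> \<le> (\<Sum>k. ennreal (2 / w0 y) * ennreal (2 * rr k))"
  proof (intro suminf_le allI)
    fix k
    have "emeasure lborel {x. Phi (Complex x y) \<in> ball (c k) (rr k)} \<le> ennreal (2 * (2 * rr k / w0 y))"
      by (rule slice_ball[OF y rr_pos])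
    also have "2 * (2 * rr k / w0 y) = (2 / w0 y) * (2 * rr k)" by simp
    also have "ennreal \<dots> = ennreal (2 / w0 y) * ennreal (2 * rr k)"
      using w rr_pos[of k] by (intro ennreal_mult) auto
    finally show "emeasure lborel {x. Phi (Complex x y) \<in> ball (c k) (rr k)} \<le> ennreal (2 / w0 y) * ennreal (2 * rr k)" .
  qed auto
  also have "\<dots> = ennreal (2 / w0 y) * ennreal 4" by (simp add: sum_rr)
  also have "\<dots> = ennreal (8 / w0 y)" using w ennreal_mult[of "2 / w0 y" 4] by simp
  finally show ?thesis .
qed

lemma slice_U1:
  assumes y: "y > 0"
  shows "emeasure lborel {x. Phi (Complex x y) \<in> U1} \<le> ennreal (16 / w0 y)"
proof -
  have w: "w0 y > 0" using w0_pos[OF y] .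
  have eq: "{x. Phi (Complex x y) \<in> U1} = (\<Union>k. {x. Phi (Complex x y) \<in> ball (qr k) (rr k)}) \<union> (\<Union>k. {x. Phi (Complex x y) \<in> ball (- qr k) (rr k)})"
    by (auto simp: U1_def)
  have "emeasure lborel {x. Phi (Complex x y) \<in> U1} \<le> emeasure lborel (\<Union>k. {x. Phi (Complex x y) \<in> ball (qr k) (rr k)}) + emeasure lborel (\<Union>k. {x. Phi (Complex x y) \<in> ball (- qr k) (rr k)})"
    unfolding eq by (rule emeasure_subadditive) (rule meas_slice_UN[OF y open_ball])+
  also have "\<dots> \<le> ennreal (8 / w0 y) + ennreal (8 / w0 y)"
    by (intro add_mono slice_union[OF y]) auto
  also have "\<dots> = ennreal (16 / w0 y)" using w by (simp flip: ennreal_plus)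
  finally show ?thesis .
qed

definition V2 :: "complex set" where "V2 = {z\<in>uhp. Phi z \<in> U1}"

lemma open_V2: "open V2"
  unfolding V2_def using continuous_open_preimage[OF cont_Phi open_uhp open_U1] by (simp add: vimage_def Int_def)

lemma area_V2: "emeasure hyp_area V2 < \<infinity>"
proof -
  have "emeasure hyp_area V2 = (\<integral>\<^sup>+ y. \<integral>\<^sup>+ x. rho (Complex x y) * indicator V2 (Complex x y) \<partial>lborel \<partial>lborel)"
    using open_V2 by (intro hyp_area_tonelli) auto
  also have "\<dots> \<le> (\<integral>\<^sup>+ y. 16 * ennreal (inverse (1 + y^2)) \<partial>lborel)"
  proof (intro nn_integral_mono)
    fix y :: real
    show "(\<integral>\<^sup>+ x. rho (Complex x y) * indicator V2 (Complex x y) \<partial>lborel) \<le> 16 * ennreal (inverse (1 + y^2))"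
    proof (cases "y > 0")
      case False
      then show ?thesis by (simp add: rho_def)
    next
      case True
      have w: "w0 y > 0" using w0_pos[OF True] .
      have "(\<integral>\<^sup>+ x. rho (Complex x y) * indicator V2 (Complex x y) \<partial>lborel)
          = (\<integral>\<^sup>+ x. ennreal (1 / y^2) * indicator {x. Phi (Complex x y) \<in> U1} x \<partial>lborel)"
        using True by (intro nn_integral_cong) (auto simp: rho_def V2_def uhp_iff indicator_def)
      also have "\<dots> = ennreal (1 / y^2) * emeasure lborel {x. Phi (Complex x y) \<in> U1}"
        using open_slice[OF True open_U1] by (intro nn_integral_cmult_indicator) auto
      also have "\<dots> \<le> ennreal (1 / y^2) * ennreal (16 / w0 y)"
        by (intro mult_left_mono slice_U1[OF True]) auto
      also have "\<dots> = ennreal (16 * (y / (1 + y^2)^2))"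
      proof -
        have p0: "1 + y^2 \<noteq> 0" by (smt (verit) zero_le_power2)
        then have p: "(1 + y^2)^2 \<noteq> 0" by simp
        have "1 / y^2 * (16 / w0 y) = 16 * (y / (1 + y^2)^2)"
          using True p unfolding w0_def by (simp add: field_simps power3_eq_cube power2_eq_square[of y])
        then show ?thesis using True w by (simp flip: ennreal_mult)
      qed
      also have "\<dots> \<le> ennreal (16 * inverse (1 + y^2))"
      proof (intro ennreal_leI mult_left_mono)
        have p: "1 + y^2 > 0" by (simp add: add_pos_nonneg)
        have "y \<le> 1 + y^2"
        proof (cases "y \<le> 1")
          case True then show ?thesis by (smt (verit) zero_le_power2)
        next
          case False then have "y \<le> y^2" by (simp add: power2_eq_square)
          then show ?thesis by simp
        qed
        then have "y / (1 + y^2)^2 \<le> (1 + y^2) / (1 + y^2)^2" using p by (intro divide_right_mono) auto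
        also have "\<dots> = inverse (1 + y^2)" using p by (simp add: power2_eq_square inverse_eq_divide)
        finally show "y / (1 + y^2)^2 \<le> inverse (1 + y^2)" .
      qed auto
      also have "\<dots> = 16 * ennreal (inverse (1 + y^2))"
        by (simp add: ennreal_mult'' add_pos_nonneg)
      finally show ?thesis .
    qed
  qed
  also have "\<dots> = 16 * (\<integral>\<^sup>+ y. ennreal (inverse (1 + y^2)) \<partial>lborel)"
    by (intro nn_integral_cmult) auto
  also have "\<dots> < \<infinity>" using int_inv_finite by (simp add: ennreal_mult_less_top)
  finally show ?thesis .
qed

lemma emeasure_Ioi_top: "emeasure lborel {0::real<..} = \<infinity>"
proof -
  have "of_nat n \<le> emeasure lborel {0::real<..}" for n
  proof -
    have "emeasure lborel {0::real<..<real n} \<le> emeasure lborel {0::real<..}" by (intro emeasure_mono) auto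
    then show ?thesis by (simp add: ennreal_of_nat_eq_real_of_nat)
  qed
  then have "(SUP n. of_nat n :: ennreal) \<le> emeasure lborel {0::real<..}" by (intro SUP_least) auto
  then show ?thesis by (simp add: ennreal_SUP_of_nat_eq_top top_unique)
qed

lemma area_Q1: "emeasure hyp_area {z\<in>uhp. H1 z > 0} = \<infinity>"
proof -
  have eq: "{z\<in>uhp. H1 z > 0} = {z. Im z > 0 \<and> Re z > 0}"
  proof -
    have "H1 z > 0 \<longleftrightarrow> Re z > 0" if "Im z > 0" for z
    proof -
      have "cmod z > 0" using that by (auto simp: complex_eq_iff)
      then show ?thesis by (simp add: H1_def zero_less_divide_iff)
    qed
    then show ?thesis by (auto simp: uhp_iff)
  qed
  have meas: "{z. Im z > 0 \<and> Re z > 0} \<in> sets borel" by measurable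
  have "emeasure hyp_area {z\<in>uhp. H1 z > 0} = (\<integral>\<^sup>+ y. \<integral>\<^sup>+ x. rho (Complex x y) * indicator {z. Im z > 0 \<and> Re z > 0} (Complex x y) \<partial>lborel \<partial>lborel)"
    unfolding eq using meas by (rule hyp_area_tonelli)
  also have "\<dots> = (\<integral>\<^sup>+ y. (\<infinity>::ennreal) * indicator {0::real<..} y \<partial>lborel)"
  proof (rule nn_integral_cong)
    fix y :: real
    show "(\<integral>\<^sup>+ x. rho (Complex x y) * indicator {z. Im z > 0 \<and> Re z > 0} (Complex x y) \<partial>lborel) = \<infinity> * indicator {0<..} y"
    proof (cases "y > 0")
      case False then show ?thesis by (simp add: rho_def)
    next
      case True
      have "(\<integral>\<^sup>+ x. rho (Complex x y) * indicator {z. Im z > 0 \<and> Re z > 0} (Complex x y) \<partial>lborel)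
          = (\<integral>\<^sup>+ x. ennreal (1 / y^2) * indicator {0::real<..} x \<partial>lborel)"
        using True by (intro nn_integral_cong) (auto simp: rho_def indicator_def)
      also have "\<dots> = ennreal (1 / y^2) * \<infinity>" by (simp add: nn_integral_cmult_indicator emeasure_Ioi_top)
      also have "\<dots> = \<infinity>" using True by (simp add: ennreal_mult_top)
      finally show ?thesis using True by simp
    qed
  qed
  also have "\<dots> = \<infinity> * emeasure lborel {0::real<..}" by (rule nn_integral_cmult_indicator) auto
  also have "\<dots> = \<infinity>" by (simp add: emeasure_Ioi_top)
  finally show ?thesis .
qed

theorem proposition2:
  shows "\<exists>\<Gamma> F1 F2. fuchsian \<Gamma> \<and>
           emeasure hyp_area F1 \<noteq> emeasure hyp_area F2 \<and>
           fund_conditions \<Gamma> F1 \<and> fund_conditions \<Gamma> F2"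
proof -
  define F1 where "F1 = uhp \<inter> interior (closure {z\<in>uhp. H1 z > 0})"
  define F2 where "F2 = uhp \<inter> interior (closure {z\<in>uhp. H2 z > 0})"
  have f1: "fund_conditions G0 F1" and q1: "{z\<in>uhp. H1 z > 0} \<subseteq> F1"
    unfolding F1_def using regular_from_H[OF cont_H1 H1_anti H1_dense] by auto
  have f2: "fund_conditions G0 F2"
    unfolding F2_def using regular_from_H[OF cont_H2 H2_anti H2_dense] by auto
  have "F1 \<in> sets borel" unfolding F1_def using open_uhp by auto
  then have "emeasure hyp_area {z\<in>uhp. H1 z > 0} \<le> emeasure hyp_area F1"
    using q1 by (intro emeasure_mono) (auto simp: hyp_area_def)
  then have a1: "emeasure hyp_area F1 = \<infinity>" using area_Q1 by (simp add: top_unique)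
  have "F2 \<subseteq> V2" unfolding F2_def V2_def by (rule F2_sub)
  then have "emeasure hyp_area F2 \<le> emeasure hyp_area V2"
    using open_V2 by (intro emeasure_mono) (auto simp: hyp_area_def)
  then have a2: "emeasure hyp_area F2 < \<infinity>" using area_V2 by (meson le_less_trans)
  show ?thesis using fuchsian_G0 f1 f2 a1 a2 by (intro exI[of _ G0] exI[of _ F1] exI[of _ F2]) auto
qed

end
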